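(* If $n$ is a product of exactly $2$ or exactly $3$ primes, not necessarily distinct (i.e., $n=pq$ or $n=pqr$ with $p,q,r$ prime), then the $n\times n$ square has no perfect Mondrian partition.
   Context: A Mondrian partition of an $n\times n$ square ($n$ a positive integer) is a dissection of the square into $k\ge 2$ non-overlapping rectangles with positive integer side lengths which are pairwise non-congruent (rectangles of dimensions $a\times b$ and $b\times a$ count as congruent). It is perfect if all its rectangles have the same area. *)

theory Defs
  imports "HOL-Computational_Algebra.Primes"
begin

text \<open>An axis-parallel rectangle with integer corners and positive integer side lengths,
  placed in the square [0,n] x [0,n], is encoded as (x, y, w, h): lower-left corner (x,y),
  width w, height h.\<close>

type_synonym rect = "nat \<times> nat \<times> nat \<times> nat"

definition rwidth :: "rect \<Rightarrow> nat" where "rwidth r = fst (snd (snd r))"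
definition rheight :: "rect \<Rightarrow> nat" where "rheight r = snd (snd (snd r))"

definition cells :: "rect \<Rightarrow> (nat \<times> nat) set" where
  "cells r = (case r of (x, y, w, h) \<Rightarrow> {x..<x+w} \<times> {y..<y+h})"

definition area :: "rect \<Rightarrow> nat" where "area r = rwidth r * rheight r"

definition congruent_rect :: "rect \<Rightarrow> rect \<Rightarrow> bool" where
  "congruent_rect r s \<longleftrightarrow>
     (rwidth r = rwidth s \<and> rheight r = rheight s) \<or>
     (rwidth r = rheight s \<and> rheight r = rwidth s)"

definition dissection :: "nat \<Rightarrow> rect set \<Rightarrow> bool" where
  "dissection n R \<longleftrightarrow> finite R \<and>
     (\<forall>r\<in>R. rwidth r > 0 \<and> rheight r > 0 \<and> cells r \<subseteq> {0..<n} \<times> {0..<n}) \<and>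
     (\<forall>c\<in>{0..<n} \<times> {0..<n}. \<exists>!r. r \<in> R \<and> c \<in> cells r)"

definition mondrian_partition :: "nat \<Rightarrow> rect set \<Rightarrow> bool" where
  "mondrian_partition n R \<longleftrightarrow> dissection n R \<and> card R \<ge> 2 \<and>
     (\<forall>r\<in>R. \<forall>s\<in>R. r \<noteq> s \<longrightarrow> \<not> congruent_rect r s)"

definition perfect_mondrian :: "nat \<Rightarrow> rect set \<Rightarrow> bool" where
  "perfect_mondrian n R \<longleftrightarrow> mondrian_partition n R \<and> (\<forall>r\<in>R. \<forall>s\<in>R. area r = area s)"

end

theory Submission
  imports Defs
begin


lemma cells_alt: "cells (x,y,w,h) = {x..<x+w} \<times> {y..<y+h}"
  by (simp add: cells_def)

lemma finite_cells: "finite (cells r)"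
  by (cases r) (auto simp: cells_def)

lemma card_cells: "card (cells r) = rwidth r * rheight r"
  by (cases r) (auto simp: cells_def rwidth_def rheight_def card_cartesian_product)

lemma diss_disjoint:
  assumes "dissection n R" "r \<in> R" "s \<in> R" "r \<noteq> s"
  shows "cells r \<inter> cells s = {}"
proof (rule ccontr)
  assume "cells r \<inter> cells s \<noteq> {}"
  then obtain c where c: "c \<in> cells r" "c \<in> cells s" by blast
  with assms have "c \<in> {0..<n} \<times> {0..<n}" unfolding dissection_def by blast
  with assms(1) obtain t where "\<forall>u. u \<in> R \<and> c \<in> cells u \<longrightarrow> u = t"
    unfolding dissection_def by metis
  with c assms show False by blast
qed

lemma diss_card:
  assumes "dissection n R" "X \<subseteq> {0..<n} \<times> {0..<n}"
  shows "card X = (\<Sum>r\<in>R. card (cells r \<inter> X))"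
proof -
  have fin: "finite R" using assms(1) unfolding dissection_def by blast
  have "X = (\<Union>r\<in>R. cells r \<inter> X)"
  proof
    show "X \<subseteq> (\<Union>r\<in>R. cells r \<inter> X)"
    proof
      fix c assume "c \<in> X"
      with assms obtain r where "r \<in> R" "c \<in> cells r" unfolding dissection_def by blast
      with \<open>c \<in> X\<close> show "c \<in> (\<Union>r\<in>R. cells r \<inter> X)" by blast
    qed
  qed blast
  then have "card X = card (\<Union>r\<in>R. cells r \<inter> X)" by simp
  also have "\<dots> = (\<Sum>r\<in>R. card (cells r \<inter> X))"
  proof (rule card_UN_disjoint)
    show "\<forall>i\<in>R. \<forall>j\<in>R. i \<noteq> j \<longrightarrow> cells i \<inter> X \<inter> (cells j \<inter> X) = {}"
      using diss_disjoint[OF assms(1)] by blast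
  qed (use fin finite_cells in auto)
  finally show ?thesis .
qed

lemma diss_dims:
  assumes "dissection n R" "r \<in> R"
  shows "0 < rwidth r" "0 < rheight r" "rwidth r \<le> n" "rheight r \<le> n"
    "fst r + rwidth r \<le> n" "fst (snd r) + rheight r \<le> n"
proof -
  obtain x y w h where r: "r = (x,y,w,h)" by (cases r)
  have pos: "0 < w" "0 < h" and sub: "cells r \<subseteq> {0..<n} \<times> {0..<n}"
    using assms r unfolding dissection_def by (auto simp: rwidth_def rheight_def)
  have "(x+w-1, y+h-1) \<in> cells r" using pos r by (auto simp: cells_def)
  with sub have "x + w - 1 < n" "y + h - 1 < n" by auto
  with pos r show "0 < rwidth r" "0 < rheight r" "rwidth r \<le> n" "rheight r \<le> n"
    "fst r + rwidth r \<le> n" "fst (snd r) + rheight r \<le> n"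
    by (auto simp: rwidth_def rheight_def)
qed

lemma diss_total:
  assumes "dissection n R"
  shows "(\<Sum>r\<in>R. rwidth r * rheight r) = n * n"
proof -
  have "n * n = card ({0..<n} \<times> {0..<n})" by (simp add: card_cartesian_product)
  also have "\<dots> = (\<Sum>r\<in>R. card (cells r \<inter> ({0..<n} \<times> {0..<n})))"
    by (rule diss_card[OF assms]) simp
  also have "\<dots> = (\<Sum>r\<in>R. rwidth r * rheight r)"
  proof (rule sum.cong)
    fix r assume "r \<in> R"
    then have "cells r \<subseteq> {0..<n} \<times> {0..<n}" using assms unfolding dissection_def by blast
    then show "card (cells r \<inter> ({0..<n} \<times> {0..<n})) = rwidth r * rheight r"
      by (simp add: Int_absorb2 card_cells)
  qed simp
  finally show ?thesis by simp
qed

lemma diss_row: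
  assumes "dissection n R" "j < n"
  shows "(\<Sum>r\<in>R. if fst (snd r) \<le> j \<and> j < fst (snd r) + rheight r then rwidth r else 0) = n"
proof -
  have "n = card ({0..<n} \<times> {j})" by (simp add: card_cartesian_product)
  also have "\<dots> = (\<Sum>r\<in>R. card (cells r \<inter> ({0..<n} \<times> {j})))"
    by (rule diss_card[OF assms(1)]) (use assms in auto)
  also have "\<dots> = (\<Sum>r\<in>R. if fst (snd r) \<le> j \<and> j < fst (snd r) + rheight r then rwidth r else 0)"
  proof (rule sum.cong)
    fix r assume rR: "r \<in> R"
    obtain x y w h where r: "r = (x,y,w,h)" by (cases r)
    have "x + w \<le> n" using diss_dims(5)[OF assms(1) rR] r by (simp add: rwidth_def)
    then have "cells r \<inter> ({0..<n} \<times> {j}) = (if y \<le> j \<and> j < y + h then {x..<x+w} \<times> {j} else {})"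
      using r by (auto simp: cells_def)
    then show "card (cells r \<inter> ({0..<n} \<times> {j})) = (if fst (snd r) \<le> j \<and> j < fst (snd r) + rheight r then rwidth r else 0)"
      using r by (simp add: rwidth_def rheight_def card_cartesian_product)
  qed simp
  finally show ?thesis by simp
qed

lemma diss_col:
  assumes "dissection n R" "i < n"
  shows "(\<Sum>r\<in>R. if fst r \<le> i \<and> i < fst r + rwidth r then rheight r else 0) = n"
proof -
  have "n = card ({i} \<times> {0..<n})" by (simp add: card_cartesian_product)
  also have "\<dots> = (\<Sum>r\<in>R. card (cells r \<inter> ({i} \<times> {0..<n})))"
    by (rule diss_card[OF assms(1)]) (use assms in auto)
  also have "\<dots> = (\<Sum>r\<in>R. if fst r \<le> i \<and> i < fst r + rwidth r then rheight r else 0)"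
  proof (rule sum.cong)
    fix r assume rR: "r \<in> R"
    obtain x y w h where r: "r = (x,y,w,h)" by (cases r)
    have "y + h \<le> n" using diss_dims(6)[OF assms(1) rR] r by (simp add: rheight_def)
    then have "cells r \<inter> ({i} \<times> {0..<n}) = (if x \<le> i \<and> i < x + w then {i} \<times> {y..<y+h} else {})"
      using r by (auto simp: cells_def)
    then show "card (cells r \<inter> ({i} \<times> {0..<n})) = (if fst r \<le> i \<and> i < fst r + rwidth r then rheight r else 0)"
      using r by (simp add: rwidth_def rheight_def card_cartesian_product)
  qed simp
  finally show ?thesis by simp
qed



definition shapeset :: "nat \<Rightarrow> nat \<Rightarrow> nat \<Rightarrow> nat set" where
  "shapeset n k A = {a. a dvd A \<and> n \<le> k * a \<and> k * a * a \<le> n * n}"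

lemma shapeset_finite: "0 < A \<Longrightarrow> finite (shapeset n k A)"
  by (rule finite_subset[of _ "{..A}"]) (auto simp: shapeset_def dest: dvd_imp_le)

definition mside :: "rect \<Rightarrow> nat" where "mside r = min (rwidth r) (rheight r)"

lemma perfect_basic:
  assumes "perfect_mondrian n R"
  obtains A where "card R * A = n * n" "\<And>r. r \<in> R \<Longrightarrow> rwidth r * rheight r = A"
    "2 \<le> card R" "inj_on mside R" "mside ` R \<subseteq> shapeset n (card R) A"
proof -
  have D: "dissection n R" and c2: "2 \<le> card R" and NC: "\<forall>r\<in>R. \<forall>s\<in>R. r \<noteq> s \<longrightarrow> \<not> congruent_rect r s"
    and EA: "\<forall>r\<in>R. \<forall>s\<in>R. area r = area s"
    using assms unfolding perfect_mondrian_def mondrian_partition_def by blast+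
  from c2 have "R \<noteq> {}" by auto
  then obtain r0 where r0: "r0 \<in> R" by blast
  define A where "A = rwidth r0 * rheight r0"
  have AR: "\<And>r. r \<in> R \<Longrightarrow> rwidth r * rheight r = A"
  proof -
    fix r assume "r \<in> R"
    then have "area r = area r0" using EA r0 by blast
    then show "rwidth r * rheight r = A" unfolding A_def area_def .
  qed
  have tot: "card R * A = n * n"
    using diss_total[OF D] AR by simp
  have inj: "inj_on mside R"
  proof (rule inj_onI)
    fix r s assume rs: "r \<in> R" "s \<in> R" "mside r = mside s"
    have p: "0 < rwidth r" "0 < rheight r" "0 < rwidth s" "0 < rheight s"
      using diss_dims[OF D] rs by auto
    have ar: "rwidth r * rheight r = rwidth s * rheight s" using AR rs by simp
    have "congruent_rect r s"
      unfolding congruent_rect_def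
    proof -
      consider "rwidth r \<le> rheight r" "rwidth s \<le> rheight s" | "rwidth r \<le> rheight r" "rheight s \<le> rwidth s"
        | "rheight r \<le> rwidth r" "rwidth s \<le> rheight s" | "rheight r \<le> rwidth r" "rheight s \<le> rwidth s"
        by linarith
      then show "(rwidth r = rwidth s \<and> rheight r = rheight s) \<or> (rwidth r = rheight s \<and> rheight r = rwidth s)"
      proof cases
        case 1 then have "rwidth r = rwidth s" using rs(3) by (simp add: mside_def)
        then show ?thesis using ar p by auto
      next
        case 2 then have e: "rwidth r = rheight s" using rs(3) by (simp add: mside_def)
        then have "rheight r = rwidth s" using ar p by (simp add: mult.commute)
        then show ?thesis using e by auto
      next
        case 3 then have e: "rheight r = rwidth s" using rs(3) by (simp add: mside_def)
        then have "rwidth r = rheight s" using ar p by (simp add: mult.commute)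
        then show ?thesis using e by auto
      next
        case 4 then have e: "rheight r = rheight s" using rs(3) by (simp add: mside_def)
        then show ?thesis using ar p by auto
      qed
    qed
    then show "r = s" using NC rs by blast
  qed
  have sub: "mside ` R \<subseteq> shapeset n (card R) A"
  proof
    fix a assume "a \<in> mside ` R"
    then obtain r where r: "r \<in> R" "a = mside r" by blast
    define b where "b = max (rwidth r) (rheight r)"
    have ab: "a * b = A" using AR[OF r(1)] r(2) unfolding b_def mside_def
      by (cases "rwidth r \<le> rheight r") (auto simp: max_def min_def mult.commute)
    have bn: "b \<le> n" using diss_dims[OF D r(1)] unfolding b_def by auto
    have ab2: "a \<le> b" unfolding b_def r(2) mside_def by simp
    have "n * n = (card R * a) * b" using tot ab by (simp add: mult.assoc)
    also have "\<dots> \<le> (card R * a) * n" using bn by (rule mult_le_mono2)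
    finally have "n * n \<le> (card R * a) * n" .
    then have 1: "n \<le> card R * a"
      by (cases "n = 0") auto
    have "card R * a * a \<le> card R * a * b" using ab2 by (rule mult_le_mono2)
    also have "\<dots> = n * n" using tot ab by (simp add: mult.assoc)
    finally have 2: "card R * a * a \<le> n * n" .
    show "a \<in> shapeset n (card R) A" unfolding shapeset_def using ab 1 2 by auto
  qed
  show ?thesis using that tot AR c2 inj sub by blast
qed



lemma tau_fin: "0 < (x::nat) \<Longrightarrow> finite {d. d dvd x}"
  by (rule finite_subset[of _ "{..x}"]) (auto dest: dvd_imp_le)

lemma tau_mult:
  assumes "0 < (x::nat)" "0 < y"
  shows "card {d. d dvd x * y} \<le> card {d. d dvd x} * card {d. d dvd y}"
proof -
  have "{d. d dvd x * y} \<subseteq> (\<lambda>(a,b). a * b) ` ({d. d dvd x} \<times> {d. d dvd y})"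
  proof
    fix d assume "d \<in> {d. d dvd x * y}"
    then obtain a b where "d = a * b" "a dvd x" "b dvd y" using division_decomp by blast
    then show "d \<in> (\<lambda>(a,b). a * b) ` ({d. d dvd x} \<times> {d. d dvd y})" by force
  qed
  then have "card {d. d dvd x * y} \<le> card ((\<lambda>(a,b). a * b) ` ({d. d dvd x} \<times> {d. d dvd y}))"
    by (rule card_mono[rotated]) (use assms tau_fin in auto)
  also have "\<dots> \<le> card ({d. d dvd x} \<times> {d. d dvd y})"
    by (rule card_image_le) (use assms tau_fin in auto)
  finally show ?thesis by (simp add: card_cartesian_product)
qed

lemma tau_pp:
  assumes "prime (p::nat)"
  shows "card {d. d dvd p ^ e} \<le> e + 1"
proof -
  have "{d. d dvd p ^ e} = (\<lambda>i. p ^ i) ` {..e}"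
    using divides_primepow_nat[OF assms] by auto
  then have "card {d. d dvd p ^ e} \<le> card {..e}" by (metis card_image_le finite_atMost)
  then show ?thesis by simp
qed

lemma sq_inj: "(x::nat) * x = y * y \<Longrightarrow> x = y"
proof (rule ccontr)
  assume e: "x * x = y * y" and "x \<noteq> y"
  then consider "x < y" | "y < x" by linarith
  then show False
  proof cases
    case 1 then have "x * x \<le> x * y" by simp
    also have "x * y < y * y" using 1 by simp
    finally show False using e by simp
  next
    case 2 then have "y * y \<le> y * x" by simp
    also have "y * x < x * x" using 2 by simp
    finally show False using e by simp
  qed
qed

lemma halving:
  assumes "0 < (A::nat)"
  shows "2 * card {a. a dvd A \<and> a * a \<le> A} \<le> card {a. a dvd A} + 1"
proof -
  define L where "L = {a. a dvd A \<and> a * a \<le> A}"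
  define H where "H = {a. a dvd A \<and> A \<le> a * a}"
  have finD: "finite {a. a dvd A}" using tau_fin assms by blast
  have finL: "finite L" "finite H" unfolding L_def H_def by (rule finite_subset[OF _ finD]; blast)+
  have sub: "(\<lambda>a. A div a) ` L \<subseteq> H"
  proof
    fix b assume "b \<in> (\<lambda>a. A div a) ` L"
    then obtain a where a: "a dvd A" "a * a \<le> A" "b = A div a" unfolding L_def by blast
    then obtain c where c: "A = a * c" by (auto elim: dvdE)
    with assms have ap: "0 < a" "0 < c" by auto
    have bc: "b = c" using a(3) c ap by simp
    have "a * a \<le> a * c" using a(2) c by simp
    then have "a \<le> c" using ap by simp
    then have "a * c \<le> c * c" by simp
    moreover have "c dvd A" using c by simp
    ultimately show "b \<in> H" unfolding H_def using bc c by (simp add: mult.commute)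
  qed
  have inj: "inj_on (\<lambda>a. A div a) L"
  proof (rule inj_onI)
    fix a b assume ab: "a \<in> L" "b \<in> L" "A div a = A div b"
    obtain c where c: "A = a * c" using ab(1) unfolding L_def by (auto elim: dvdE)
    obtain d where d: "A = b * d" using ab(2) unfolding L_def by (auto elim: dvdE)
    have ap: "0 < a" "0 < c" using c assms by (simp_all add: gr0I)
    have b0: "0 < b" using d assms by (cases b) simp_all
    have "A div a = c" using c ap by simp
    moreover have "A div b = d" using d b0 by simp
    ultimately have cd: "c = d" using ab(3) by simp
    have "a * c = A" using c by simp
    also have "A = b * c" using d cd by simp
    finally have "a * c = b * c" .
    then show "a = b" using ap by simp
  qed
  have LH: "card L \<le> card H"
  proof -
    have "card L = card ((\<lambda>a. A div a) ` L)" using card_image[OF inj] by simp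
    also have "\<dots> \<le> card H" by (rule card_mono[OF finL(2) sub])
    finally show ?thesis .
  qed
  have un: "L \<union> H = {a. a dvd A}" unfolding L_def H_def by auto
  have sqfin: "finite {a. a * a = A}"
  proof (rule finite_subset[of _ "{..A}"])
    show "{a. a * a = A} \<subseteq> {..A}"
    proof
      fix a assume "a \<in> {a. a * a = A}"
      moreover have "a \<le> a * a" by (rule le_square)
      ultimately show "a \<in> {..A}" by simp
    qed
  qed simp
  have sq1: "card {a. a * a = A} \<le> 1"
  proof -
    have "\<forall>x\<in>{a. a * a = A}. \<forall>y\<in>{a. a * a = A}. x = y" using sq_inj by blast
    then have "card {a. a * a = A} \<le> Suc 0" by (rule card_le_Suc0_iff_eq[OF sqfin, THEN iffD2])
    then show ?thesis by simp
  qed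
  have "L \<inter> H \<subseteq> {a. a * a = A}" unfolding L_def H_def by auto
  then have "card (L \<inter> H) \<le> card {a. a * a = A}" by (rule card_mono[OF sqfin])
  then have I1: "card (L \<inter> H) \<le> 1" using sq1 by linarith
  have "card L + card H = card (L \<union> H) + card (L \<inter> H)"
    by (rule card_Un_Int[OF finL])
  then have "card L + card H \<le> card {a. a dvd A} + 1" using un I1 by simp
  then show ?thesis using LH unfolding L_def by simp
qed



lemma le2_cases: "(x::nat) \<le> 2 \<Longrightarrow> x = 0 \<or> x = 1 \<or> x = 2" by auto

lemma shape_L:
  assumes "k * A = n * n" "0 < k"
  shows "shapeset n k A \<subseteq> {a. a dvd A \<and> a * a \<le> A}"
proof
  fix a assume "a \<in> shapeset n k A"
  then have a: "a dvd A" "k * a * a \<le> n * n" unfolding shapeset_def by auto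
  then have "k * (a * a) \<le> k * A" using assms(1) by (simp add: mult.assoc)
  then have "a * a \<le> A" using assms(2) by simp
  then show "a \<in> {a. a dvd A \<and> a * a \<le> A}" using a by simp
qed

lemma count_bound:
  assumes "k * A = n * n" "0 < k" "0 < A"
  shows "2 * card (shapeset n k A) \<le> card {a. a dvd A} + 1"
proof -
  have "card (shapeset n k A) \<le> card {a. a dvd A \<and> a * a \<le> A}"
    by (rule card_mono[OF _ shape_L[OF assms(1,2)]])
       (rule finite_subset[OF _ tau_fin[OF assms(3)]], blast)
  then show ?thesis using halving[OF assms(3)] by linarith
qed

lemma count_bound2:
  assumes "k * A = n * n" "0 < k" "0 < A" "k < n"
  shows "2 * card (shapeset n k A) + 1 \<le> card {a. a dvd A}"
proof -
  define L where "L = {a. a dvd A \<and> a * a \<le> A}"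
  have finL: "finite L" unfolding L_def by (rule finite_subset[OF _ tau_fin[OF assms(3)]], blast)
  have "shapeset n k A \<subseteq> L - {1}"
  proof
    fix a assume a: "a \<in> shapeset n k A"
    then have "a \<in> L" using shape_L[OF assms(1,2)] unfolding L_def by blast
    moreover have "a \<noteq> 1"
    proof
      assume "a = 1"
      then have "n \<le> k" using a unfolding shapeset_def by simp
      then show False using assms(4) by simp
    qed
    ultimately show "a \<in> L - {1}" by simp
  qed
  then have "card (shapeset n k A) \<le> card (L - {1})"
    by (rule card_mono[rotated]) (use finL in auto)
  also have "card (L - {1}) = card L - 1"
    using assms(3) by (simp add: L_def)
  finally have c1: "card (shapeset n k A) \<le> card L - 1" .
  have "1 \<in> L" using assms(3) unfolding L_def by simp
  then have "card L \<noteq> 0" using finL by auto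
  then have "card (shapeset n k A) + 1 \<le> card L" using c1 by linarith
  then show ?thesis using halving[OF assms(3)] unfolding L_def by linarith
qed

lemma decomp3:
  assumes "prime (p::nat)" "prime q" "prime r" "k dvd (p*q*r)*(p*q*r)"
  shows "\<exists>\<alpha> \<beta> \<gamma>. \<alpha> \<le> 2 \<and> \<beta> \<le> 2 \<and> \<gamma> \<le> 2 \<and> k = p^\<alpha> * q^\<beta> * r^\<gamma>"
proof -
  have "(p*q*r)*(p*q*r) = p^2 * (q^2 * r^2)" by (simp add: power2_eq_square algebra_simps)
  with assms(4) obtain k1 k' where k: "k = k1 * k'" "k1 dvd p^2" "k' dvd q^2 * r^2"
    using division_decomp by metis
  obtain k2 k3 where k': "k' = k2 * k3" "k2 dvd q^2" "k3 dvd r^2"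
    using division_decomp[OF k(3)] by blast
  obtain \<alpha> where a: "\<alpha> \<le> 2" "k1 = p^\<alpha>" using k(2) divides_primepow_nat[OF assms(1)] by blast
  obtain \<beta> where b: "\<beta> \<le> 2" "k2 = q^\<beta>" using k'(2) divides_primepow_nat[OF assms(2)] by blast
  obtain \<gamma> where c: "\<gamma> \<le> 2" "k3 = r^\<gamma>" using k'(3) divides_primepow_nat[OF assms(3)] by blast
  show ?thesis using a b c k k' by (intro exI[of _ \<alpha>] exI[of _ \<beta>] exI[of _ \<gamma>]) (simp add: mult.assoc)
qed

lemma decomp2:
  assumes "prime (p::nat)" "prime q" "k dvd (p*q)*(p*q)"
  shows "\<exists>\<alpha> \<beta>. \<alpha> \<le> 2 \<and> \<beta> \<le> 2 \<and> k = p^\<alpha> * q^\<beta>"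
proof -
  have "(p*q)*(p*q) = p^2 * q^2" by (simp add: power2_eq_square algebra_simps)
  with assms(3) obtain k1 k2 where k: "k = k1 * k2" "k1 dvd p^2" "k2 dvd q^2"
    using division_decomp by metis
  obtain \<alpha> where a: "\<alpha> \<le> 2" "k1 = p^\<alpha>" using k(2) divides_primepow_nat[OF assms(1)] by blast
  obtain \<beta> where b: "\<beta> \<le> 2" "k2 = q^\<beta>" using k(3) divides_primepow_nat[OF assms(2)] by blast
  show ?thesis using a b k by blast
qed

lemma pow_split: "(a::nat) \<le> 2 \<Longrightarrow> (p::nat)^a * p^(2-a) = p^2"
  using power_add[of p a "2-a"] by simp

lemma composite3:
  assumes pr: "prime (p::nat)" "prime q" "prime r" and n: "n = p*q*r"
    and kA: "k * A = n * n" and k2: "2 \<le> k" and np: "\<not> prime k" and k4: "k \<noteq> 4"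
  shows "card (shapeset n k A) < k"
proof -
  have kd: "k dvd (p*q*r)*(p*q*r)" using kA n by (metis dvd_triv_left)
  obtain \<alpha> \<beta> \<gamma> where abc: "\<alpha> \<le> 2" "\<beta> \<le> 2" "\<gamma> \<le> 2" and k: "k = p^\<alpha> * q^\<beta> * r^\<gamma>"
    using decomp3[OF pr kd] by blast
  have pg: "2 \<le> p" "2 \<le> q" "2 \<le> r" using pr prime_ge_2_nat by auto
  define X where "X = p^(2-\<alpha>) * q^(2-\<beta>) * r^(2-\<gamma>)"
  have "k * X = (p^\<alpha> * p^(2-\<alpha>)) * (q^\<beta> * q^(2-\<beta>)) * (r^\<gamma> * r^(2-\<gamma>))"
    unfolding k X_def by (simp add: algebra_simps)
  also have "\<dots> = p^2 * q^2 * r^2" using abc by (simp add: pow_split)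
  also have "\<dots> = n * n" unfolding n by (simp add: power2_eq_square algebra_simps)
  finally have "k * X = k * A" using kA by simp
  then have AX: "A = X" using k2 by simp
  have Apos: "0 < A" unfolding AX X_def using pg by simp
  have tau: "card {d. d dvd A} \<le> (3-\<alpha>) * (3-\<beta>) * (3-\<gamma>)"
  proof -
    have "card {d. d dvd A} \<le> card {d. d dvd p^(2-\<alpha>) * q^(2-\<beta>)} * card {d. d dvd r^(2-\<gamma>)}"
      unfolding AX X_def by (rule tau_mult) (use pg in simp_all)
    also have "\<dots> \<le> (card {d. d dvd p^(2-\<alpha>)} * card {d. d dvd q^(2-\<beta>)}) * card {d. d dvd r^(2-\<gamma>)}"
      by (rule mult_le_mono1, rule tau_mult) (use pg in simp_all)
    also have "\<dots> \<le> ((2-\<alpha>+1) * (2-\<beta>+1)) * (2-\<gamma>+1)"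
      by (intro mult_le_mono tau_pp pr)
    also have "\<dots> = (3-\<alpha>) * (3-\<beta>) * (3-\<gamma>)"
    proof -
      have e: "2-\<alpha>+1 = 3-\<alpha>" "2-\<beta>+1 = 3-\<beta>" "2-\<gamma>+1 = 3-\<gamma>" using abc by auto
      show ?thesis by (simp only: e)
    qed
    finally show ?thesis .
  qed
  have sum2: "2 \<le> \<alpha> + \<beta> + \<gamma>"
  proof (rule ccontr)
    assume "\<not> 2 \<le> \<alpha> + \<beta> + \<gamma>"
    then have "(\<alpha> = 0 \<and> \<beta> = 0 \<and> \<gamma> = 0) \<or> (\<alpha> = 1 \<and> \<beta> = 0 \<and> \<gamma> = 0) \<or> (\<alpha> = 0 \<and> \<beta> = 1 \<and> \<gamma> = 0) \<or> (\<alpha> = 0 \<and> \<beta> = 0 \<and> \<gamma> = 1)"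
      by auto
    then show False using k k2 np pr by auto
  qed
  have box: "(3-\<alpha>) * (3-\<beta>) * (3-\<gamma>) \<le> 12"
  proof -
    have "\<alpha> = 0 \<or> \<alpha> = 1 \<or> \<alpha> = 2" "\<beta> = 0 \<or> \<beta> = 1 \<or> \<beta> = 2" "\<gamma> = 0 \<or> \<gamma> = 1 \<or> \<gamma> = 2"
      using abc by auto
    then show ?thesis using sum2 by auto
  qed
  have k6: "6 \<le> k"
  proof -
    have "k \<noteq> 2" "k \<noteq> 3" "k \<noteq> 5" using np by auto
    then show ?thesis using k2 k4 by linarith
  qed
  show ?thesis
  proof (cases "k < n")
    case True
    have "2 * card (shapeset n k A) + 1 \<le> card {a. a dvd A}"
      by (rule count_bound2[OF kA _ Apos True]) (use k2 in simp)
    then show ?thesis using tau box k6 by linarith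
  next
    case False
    have "2 * 2 \<le> p * q" using pg by (intro mult_le_mono) auto
    then have "2 * 2 * 2 \<le> p * q * r" using pg by (intro mult_le_mono) auto
    then have "8 \<le> n" unfolding n by simp
    have "2 * card (shapeset n k A) \<le> card {a. a dvd A} + 1"
      by (rule count_bound[OF kA _ Apos]) (use k2 in simp)
    then show ?thesis using tau box False \<open>8 \<le> n\<close> by linarith
  qed
qed

lemma composite2:
  assumes pr: "prime (p::nat)" "prime q" and n: "n = p*q"
    and kA: "k * A = n * n" and k2: "2 \<le> k" and np: "\<not> prime k"
  shows "card (shapeset n k A) < k"
proof -
  have kd: "k dvd (p*q)*(p*q)" using kA n by (metis dvd_triv_left)
  obtain \<alpha> \<beta> where abc: "\<alpha> \<le> 2" "\<beta> \<le> 2" and k: "k = p^\<alpha> * q^\<beta>"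
    using decomp2[OF pr kd] by blast
  have pg: "2 \<le> p" "2 \<le> q" using pr prime_ge_2_nat by auto
  define X where "X = p^(2-\<alpha>) * q^(2-\<beta>)"
  have "k * X = (p^\<alpha> * p^(2-\<alpha>)) * (q^\<beta> * q^(2-\<beta>))"
    unfolding k X_def by (simp add: algebra_simps)
  also have "\<dots> = p^2 * q^2" using abc by (simp add: pow_split)
  also have "\<dots> = n * n" unfolding n by (simp add: power2_eq_square algebra_simps)
  finally have "k * X = k * A" using kA by simp
  then have AX: "A = X" using k2 by simp
  have Apos: "0 < A" unfolding AX X_def using pg by simp
  have tau: "card {d. d dvd A} \<le> (3-\<alpha>) * (3-\<beta>)"
  proof -
    have "card {d. d dvd A} \<le> card {d. d dvd p^(2-\<alpha>)} * card {d. d dvd q^(2-\<beta>)}"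
      unfolding AX X_def by (rule tau_mult) (use pg in simp_all)
    also have "\<dots> \<le> (2-\<alpha>+1) * (2-\<beta>+1)"
      by (intro mult_le_mono tau_pp pr)
    also have "\<dots> = (3-\<alpha>) * (3-\<beta>)"
    proof -
      have e: "2-\<alpha>+1 = 3-\<alpha>" "2-\<beta>+1 = 3-\<beta>" using abc by auto
      show ?thesis by (simp only: e)
    qed
    finally show ?thesis .
  qed
  have sum2: "2 \<le> \<alpha> + \<beta>"
  proof (rule ccontr)
    assume "\<not> 2 \<le> \<alpha> + \<beta>"
    then have "(\<alpha> = 0 \<and> \<beta> = 0) \<or> (\<alpha> = 1 \<and> \<beta> = 0) \<or> (\<alpha> = 0 \<and> \<beta> = 1)"
      by auto
    then show False using k k2 np pr by auto
  qed
  have box: "(3-\<alpha>) * (3-\<beta>) \<le> 4"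
  proof -
    have "\<alpha> = 0 \<or> \<alpha> = 1 \<or> \<alpha> = 2" "\<beta> = 0 \<or> \<beta> = 1 \<or> \<beta> = 2"
      using abc by auto
    then show ?thesis using sum2 by auto
  qed
  have k4: "4 \<le> k"
  proof -
    have "k \<noteq> 2" "k \<noteq> 3" using np by auto
    then show ?thesis using k2 by linarith
  qed
  have "2 * card (shapeset n k A) \<le> card {a. a dvd A} + 1"
    by (rule count_bound[OF kA _ Apos]) (use k2 in simp)
  then show ?thesis using tau box k4 by linarith
qed



lemma sq_par:
  assumes "prime (l::nat)" "0 < s"
  shows "l * d * d \<noteq> s * s"
proof
  assume e: "l * d * d = s * s"
  have d0: "d \<noteq> 0" using e assms(2) by (cases "d = 0") auto
  have pe: "prime_elem l" using assms(1) by simp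
  have "multiplicity l (l * (d * d)) = 1 + (multiplicity l d + multiplicity l d)"
    using pe d0 assms(1) by (simp add: prime_elem_multiplicity_mult_distrib)
  moreover have "multiplicity l (s * s) = multiplicity l s + multiplicity l s"
    using pe assms(2) by (simp add: prime_elem_multiplicity_mult_distrib)
  ultimately show False using e by (simp add: mult.assoc) presburger
qed

definition Ep :: "nat \<Rightarrow> nat \<Rightarrow> nat set" where
  "Ep l s = {d. d dvd s * s \<and> s \<le> l * d \<and> d \<le> s}"

lemma Ep_finite: "finite (Ep l s)"
  by (rule finite_subset[of _ "{..s}"]) (auto simp: Ep_def)

lemma sq_le_imp: "(d::nat) * d \<le> s * s \<Longrightarrow> d \<le> s"
proof (rule ccontr)
  assume h: "d * d \<le> s * s" "\<not> d \<le> s"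
  then have "s < d" by simp
  then have "s * s \<le> s * d" by simp
  also have "s * d < d * d" using \<open>s < d\<close> by simp
  finally show False using h(1) by simp
qed

lemma prime_inj:
  assumes pl: "prime l" and s0: "0 < s" and n: "n = l * s" and kA: "l * A = n * n"
  shows "card (shapeset n l A) \<le> card (Ep l s)"
proof -
  have l0: "0 < l" using pl prime_gt_0_nat by blast
  have "l * A = l * (l * s * s)" using kA n by (simp add: algebra_simps)
  then have A: "A = l * s * s" using l0 by simp
  have mem: "a dvd l * (s * s) \<and> s \<le> a \<and> a * a \<le> l * (s * s)" if "a \<in> shapeset n l A" for a
  proof -
    from that have h: "a dvd A" "n \<le> l * a" "l * a * a \<le> n * n" unfolding shapeset_def by auto
    have "l * s \<le> l * a" using h(2) n by simp
    then have 1: "s \<le> a" using l0 by simp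
    have "l * (a * a) \<le> l * (l * (s * s))" using h(3) n by (simp add: algebra_simps)
    then have 2: "a * a \<le> l * (s * s)" using l0 by simp
    show ?thesis using h(1) A 1 2 by (simp add: mult.assoc)
  qed
  define phi where "phi a = (if a dvd s * s then s * s div a else a div l)" for a
  have br2: "\<exists>d. a = l * d \<and> d dvd s * s \<and> d * d \<le> s * s \<and> l * d * d \<le> s * s"
    if "a \<in> shapeset n l A" "\<not> a dvd s * s" for a
  proof -
    have m: "a dvd l * (s * s)" "s \<le> a" "a * a \<le> l * (s * s)" using mem[OF that(1)] by auto
    have "l dvd a"
    proof (rule ccontr)
      assume "\<not> l dvd a"
      then have "coprime l a" using pl prime_imp_coprime by blast
      then have "coprime a l" by (simp add: coprime_commute)
      then have "a dvd s * s" using m(1) coprime_dvd_mult_right_iff by blast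
      then show False using that(2) by simp
    qed
    then obtain d where d: "a = l * d" by (auto elim: dvdE)
    have "d dvd s * s" using m(1) d l0 by simp
    moreover have "l * (l * d * d) \<le> l * (s * s)" using m(3) d by (simp add: algebra_simps)
    then have ld: "l * d * d \<le> s * s" using l0 by simp
    moreover have "d * d \<le> l * d * d" using l0 by simp
    ultimately have "d * d \<le> s * s" by (meson order_trans)
    then show ?thesis using d ld \<open>d dvd s * s\<close> by blast
  qed
  have br1: "\<exists>d. s * s = a * d \<and> 0 < d \<and> 0 < a \<and> s * s \<le> l * d * d"
    if ain: "a \<in> shapeset n l A" and adv: "a dvd s * s" for a
  proof -
    have m: "s \<le> a" "a * a \<le> l * (s * s)" using mem[OF ain] by auto
    obtain d where d: "s * s = a * d" using adv by (auto elim: dvdE)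
    have d0: "0 < d" "0 < a" using d s0 by (auto intro!: gr0I)
    have "(a * a) * (d * d) \<le> (l * (s * s)) * (d * d)" using m(2) by (rule mult_le_mono1)
    then have "(s * s) * (s * s) \<le> (s * s) * (l * d * d)" using d by (simp add: algebra_simps)
    then have "s * s \<le> l * d * d" using s0 by simp
    then show ?thesis using d d0 by blast
  qed
  have img: "phi ` shapeset n l A \<subseteq> Ep l s"
  proof
    fix x assume "x \<in> phi ` shapeset n l A"
    then obtain a where a: "a \<in> shapeset n l A" "x = phi a" by blast
    have m: "s \<le> a" "a * a \<le> l * (s * s)" using mem[OF a(1)] by auto
    show "x \<in> Ep l s"
    proof (cases "a dvd s * s")
      case True
      obtain d where d: "s * s = a * d" "0 < d" "0 < a" "s * s \<le> l * d * d" using br1[OF a(1) True] by blast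
      have x: "x = d" using a(2) True d unfolding phi_def by simp
      have "d dvd s * s" using d(1) by simp
      moreover have "s * d \<le> a * d" using m(1) by simp
      then have "s * d \<le> s * s" using d(1) by simp
      then have "d \<le> s" using s0 by simp
      moreover have "a * s \<le> a * (l * d)"
      proof -
        have "a * s \<le> a * a" using m(1) by simp
        also have "\<dots> \<le> l * (s * s)" by (rule m(2))
        also have "\<dots> = a * (l * d)" using d(1) by (simp add: algebra_simps)
        finally show ?thesis .
      qed
      then have "s \<le> l * d" using d(3) by simp
      ultimately show ?thesis unfolding Ep_def x by simp
    next
      case False
      obtain d where d: "a = l * d" "d dvd s * s" "d * d \<le> s * s" using br2[OF a(1) False] by blast
      have x: "x = d" using a(2) False d l0 unfolding phi_def by simp
      have "d \<le> s" using d(3) by (rule sq_le_imp)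
      then show ?thesis unfolding Ep_def x using d m(1) by simp
    qed
  qed
  have inj: "inj_on phi (shapeset n l A)"
  proof (rule inj_onI)
    fix a b assume a: "a \<in> shapeset n l A" and b: "b \<in> shapeset n l A" and e: "phi a = phi b"
    show "a = b"
    proof (cases "a dvd s * s")
      case Ta: True
      obtain d where d: "s * s = a * d" "0 < d" "0 < a" "s * s \<le> l * d * d" using br1[OF a Ta] by blast
      have pa: "phi a = d" using Ta d unfolding phi_def by simp
      show ?thesis
      proof (cases "b dvd s * s")
        case True
        obtain d' where d': "s * s = b * d'" "0 < d'" "0 < b" using br1[OF b True] by blast
        have "phi b = d'" using True d' unfolding phi_def by simp
        then have "d = d'" using e pa by simp
        then show ?thesis using d d' by simp
      next
        case False
        obtain d' where d': "b = l * d'" "l * d' * d' \<le> s * s" using br2[OF b False] by blast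
        have "phi b = d'" using False d' l0 unfolding phi_def by simp
        then have "d = d'" using e pa by simp
        then have "l * d * d = s * s" using d(4) d'(2) by simp
        then show ?thesis using sq_par[OF pl s0] by blast
      qed
    next
      case Fa: False
      obtain d where d: "a = l * d" "l * d * d \<le> s * s" using br2[OF a Fa] by blast
      have pa: "phi a = d" using Fa d l0 unfolding phi_def by simp
      show ?thesis
      proof (cases "b dvd s * s")
        case True
        obtain d' where d': "s * s = b * d'" "0 < d'" "0 < b" "s * s \<le> l * d' * d'" using br1[OF b True] by blast
        have "phi b = d'" using True d' unfolding phi_def by simp
        then have "d = d'" using e pa by simp
        then have "l * d * d = s * s" using d(2) d'(4) by simp
        then show ?thesis using sq_par[OF pl s0] by blast
      next
        case False
        obtain d' where d': "b = l * d'" using br2[OF b False] by blast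
        have "phi b = d'" using False d' l0 unfolding phi_def by simp
        then have "d = d'" using e pa by simp
        then show ?thesis using d d' by simp
      qed
    qed
  qed
  show ?thesis by (rule card_inj_on_le[OF inj img Ep_finite])
qed



lemma card_list_le: "A \<subseteq> set xs \<Longrightarrow> card A \<le> length xs"
  by (metis card_length card_mono dual_order.trans finite_set)

lemma card_list_le': "A \<subseteq> set xs \<Longrightarrow> length xs \<le> m \<Longrightarrow> card A \<le> m"
  using card_list_le le_trans by blast

lemma Ep_prime:
  assumes "prime q"
  shows "card (Ep l q) \<le> 2"
proof -
  have q2: "2 \<le> q" using assms prime_ge_2_nat by blast
  have "Ep l q \<subseteq> set [1, q]"
  proof
    fix d assume "d \<in> Ep l q"
    then have d: "d dvd q^2" "d \<le> q" unfolding Ep_def by (auto simp: power2_eq_square)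
    obtain i where i: "i \<le> 2" "d = q^i" using d(1) divides_primepow_nat[OF assms] by blast
    have "i = 0 \<or> i = 1 \<or> i = 2" using i(1) by auto
    moreover have "q^2 > q" using q2 by (simp add: power2_eq_square)
    ultimately show "d \<in> set [1, q]" using i d(2) by auto
  qed
  then show ?thesis by (rule card_list_le') simp
qed

lemma Ep_sub:
  assumes pq: "prime q" and pr: "prime r" and qr: "q \<le> r"
  shows "Ep l (q*r) \<subseteq> {d. (d = 1 \<and> q*r \<le> l) \<or> (d = q \<and> r \<le> l) \<or> (d = r \<and> q \<le> l) \<or> d = q*r \<or> (d = q*q \<and> r \<le> l*q)}"
proof
  fix d assume "d \<in> Ep l (q*r)"
  then have d: "d dvd q^2 * r^2" "q*r \<le> l*d" "d \<le> q*r" unfolding Ep_def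
    by (auto simp: power2_eq_square algebra_simps)
  have q2: "2 \<le> q" "2 \<le> r" using pq pr prime_ge_2_nat by auto
  obtain d1 d2 where dd: "d = d1 * d2" "d1 dvd q^2" "d2 dvd r^2" using division_decomp[OF d(1)] by blast
  obtain i where i: "i \<le> 2" "d1 = q^i" using dd(2) divides_primepow_nat[OF pq] by blast
  obtain j where j: "j \<le> 2" "d2 = r^j" using dd(3) divides_primepow_nat[OF pr] by blast
  have ij: "i = 0 \<or> i = 1 \<or> i = 2" "j = 0 \<or> j = 1 \<or> j = 2" using i(1) j(1) by auto
  show "d \<in> {d. (d = 1 \<and> q*r \<le> l) \<or> (d = q \<and> r \<le> l) \<or> (d = r \<and> q \<le> l) \<or> d = q*r \<or> (d = q*q \<and> r \<le> l*q)}"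
  proof -
    consider "i = 0" "j = 0" | "i = 1" "j = 0" | "i = 0" "j = 1" | "i = 1" "j = 1" | "i = 2" "j = 0"
      | "i = 0" "j = 2" | "i = 2" "j = 1" | "i = 1" "j = 2" | "i = 2" "j = 2" using ij by blast
    then show ?thesis
    proof cases
      case 1 then have "d = 1" using dd i j by simp
      then show ?thesis using d(2) by simp
    next
      case 2 then have e: "d = q" using dd i j by simp
      then have "q * r \<le> q * l" using d(2) by (simp add: mult.commute)
      then have "r \<le> l" using q2 by simp
      then show ?thesis using e by simp
    next
      case 3 then have e: "d = r" using dd i j by simp
      then have "r * q \<le> r * l" using d(2) by (simp add: mult.commute)
      then have "q \<le> l" using q2 by simp
      then show ?thesis using e by simp
    next
      case 4 then have e: "d = q * r" using dd i j by simp
      then show ?thesis by simp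
    next
      case 5 then have e: "d = q * q" using dd i j by (simp add: power2_eq_square)
      then have "q * r \<le> q * (l * q)" using d(2) by (simp add: algebra_simps)
      then have "r \<le> l * q" using q2 by simp
      then show ?thesis using e by simp
    next
      case 6 then have e: "d = r * r" using dd i j by (simp add: power2_eq_square)
      then have "r * r \<le> r * q" using d(3) by (simp add: mult.commute)
      then have "r \<le> q" using q2 by simp
      then have "r = q" using qr by simp
      then show ?thesis using e by simp
    next
      case 7 then have e: "d = (q * r) * q" using dd i j by (simp add: power2_eq_square algebra_simps)
      then have "(q * r) * q \<le> (q * r) * 1" using d(3) by simp
      then have "q \<le> 1" using q2 by simp
      then show ?thesis using q2 by simp
    next
      case 8 then have e: "d = (q * r) * r" using dd i j by (simp add: power2_eq_square algebra_simps)
      then have "(q * r) * r \<le> (q * r) * 1" using d(3) by simp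
      then have "r \<le> 1" using q2 by simp
      then show ?thesis using q2 by simp
    next
      case 9 then have e: "d = (q * r) * (q * r)" using dd i j by (simp add: power2_eq_square algebra_simps)
      then have "(q * r) * (q * r) \<le> (q * r) * 1" using d(3) by simp
      then have "q * r \<le> 1" using q2 by simp
      then show ?thesis using q2 by (simp add: le_Suc_eq)
    qed
  qed
qed

lemma Ep_gen:
  assumes pq: "prime q" and pr: "prime r" and qr: "q \<le> r"
  shows "card (Ep l (q*r)) \<le> 5"
proof -
  have "Ep l (q*r) \<subseteq> set [1, q, r, q*r, q*q]" using Ep_sub[OF assms] by auto
  then show ?thesis by (rule card_list_le') simp
qed

lemma Ep_5:
  assumes pq: "prime q" and pr: "prime r" and qr: "q \<le> r"
  shows "card (Ep 5 (q*r)) \<le> 4"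
proof -
  have q2: "2 \<le> q" "2 \<le> r" using pq pr prime_ge_2_nat by auto
  show ?thesis
  proof (cases "q * r \<le> 5")
    case True
    have "r < 3"
    proof (rule ccontr)
      assume "\<not> r < 3"
      then have "2 * 3 \<le> q * r" using q2 by (intro mult_le_mono) auto
      then show False using True by simp
    qed
    then have "q = 2" "r = 2" using q2 qr by auto
    then have "Ep 5 (q*r) \<subseteq> set [1, 2, 4]" using Ep_sub[OF assms, of 5] by auto
    then show ?thesis by (rule card_list_le') simp
  next
    case False
    then have "Ep 5 (q*r) \<subseteq> set [q, r, q*r, q*q]" using Ep_sub[OF assms, of 5] by auto
    then show ?thesis by (rule card_list_le') simp
  qed
qed

lemma Ep_2:
  assumes pq: "prime q" and pr: "prime r" and qr: "q \<le> r"
  shows "card (Ep 2 (q*r)) \<le> 3"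
proof -
  have q2: "2 \<le> q" "2 \<le> r" using pq pr prime_ge_2_nat by auto
  have n1: "\<not> q * r \<le> 2"
  proof
    assume "q * r \<le> 2"
    moreover have "2 * 2 \<le> q * r" using q2 by (intro mult_le_mono) auto
    ultimately show False by simp
  qed
  show ?thesis
  proof (cases "r \<le> 2")
    case True
    then have "q = 2" "r = 2" using q2 qr by auto
    then have "Ep 2 (q*r) \<subseteq> set [2, 4]" using Ep_sub[OF assms, of 2] by auto
    then show ?thesis by (rule card_list_le') simp
  next
    case False
    then have "Ep 2 (q*r) \<subseteq> set [r, q*r, q*q]" using Ep_sub[OF assms, of 2] n1 by auto
    then show ?thesis by (rule card_list_le') simp
  qed
qed

lemma Ep_3:
  assumes pq: "prime q" and pr: "prime r" and qr: "q \<le> r" and c: "3 \<le> card (Ep 3 (q*r))"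
  shows "(q = 2 \<and> r = 2) \<or> (q = 2 \<and> r = 3) \<or> (q = 3 \<and> r = 3) \<or> (q = 2 \<and> r = 5) \<or> (q = 3 \<and> r = 5) \<or> (q = 3 \<and> r = 7)"
proof -
  have q2: "2 \<le> q" "2 \<le> r" using pq pr prime_ge_2_nat by auto
  have n1: "\<not> q * r \<le> 3"
  proof
    assume "q * r \<le> 3"
    moreover have "2 * 2 \<le> q * r" using q2 by (intro mult_le_mono) auto
    ultimately show False by simp
  qed
  show ?thesis
  proof (cases "r \<le> 3")
    case True
    then have "(q = 2 \<or> q = 3) \<and> (r = 2 \<or> r = 3)" using q2 qr by auto
    then show ?thesis using qr by auto
  next
    case False
    have cond: "q \<le> 3 \<and> r \<le> 3 * q"
    proof (rule ccontr)
      assume "\<not> (q \<le> 3 \<and> r \<le> 3 * q)"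
      then have "Ep 3 (q*r) \<subseteq> set [r, q*r] \<or> Ep 3 (q*r) \<subseteq> set [q*r, q*q]"
        using Ep_sub[OF pq pr qr, of 3] n1 False by auto
      then have "card (Ep 3 (q*r)) \<le> 2"
      proof
        assume "Ep 3 (q*r) \<subseteq> set [r, q*r]" then show ?thesis by (rule card_list_le') simp
      next
        assume "Ep 3 (q*r) \<subseteq> set [q*r, q*q]" then show ?thesis by (rule card_list_le') simp
      qed
      then show False using c by simp
    qed
    then have q23: "q = 2 \<or> q = 3" using q2 by auto
    have "r \<le> 9" using cond by linarith
    then have "r = 4 \<or> r = 5 \<or> r = 6 \<or> r = 7 \<or> r = 8 \<or> r = 9" using False by linarith
    moreover have "\<not> prime (4::nat)" "\<not> prime (6::nat)" "\<not> prime (8::nat)" "\<not> prime (9::nat)" by simp_all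
    ultimately have "r = 5 \<or> r = 7" using pr by auto
    then show ?thesis using q23 cond by auto
  qed
qed



lemma sq_lt: "(a::nat) * a < m * m \<Longrightarrow> a < m"
  using mult_le_mono not_le by blast

lemma shp12: "card (shapeset 12 3 48) \<le> 2"
proof -
  have "shapeset 12 3 48 \<subseteq> set [4, 6]"
  proof
    fix a assume "a \<in> shapeset 12 3 48"
    then have h: "a dvd 48" "12 \<le> 3*a" "3*a*a \<le> 144" by (simp_all add: shapeset_def)
    then have "a * a < 7 * 7" by simp
    then have "a < 7" by (rule sq_lt)
    then have "a = 4 \<or> a = 5 \<or> a = 6" using h(2) \<open>a < _\<close> by presburger
    then show "a \<in> set [4, 6]" using h(1) by auto
  qed
  then show ?thesis by (rule card_list_le') simp
qed

lemma shp18: "card (shapeset 18 3 108) \<le> 2"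
proof -
  have "shapeset 18 3 108 \<subseteq> set [6, 9]"
  proof
    fix a assume "a \<in> shapeset 18 3 108"
    then have h: "a dvd 108" "18 \<le> 3*a" "3*a*a \<le> 324" by (simp_all add: shapeset_def)
    then have "a * a < 11 * 11" by simp
    then have "a < 11" by (rule sq_lt)
    then have "a = 6 \<or> a = 7 \<or> a = 8 \<or> a = 9 \<or> a = 10" using h(2) \<open>a < _\<close> by presburger
    then show "a \<in> set [6, 9]" using h(1) by auto
  qed
  then show ?thesis by (rule card_list_le') simp
qed

lemma shp27: "card (shapeset 27 3 243) \<le> 2"
proof -
  have "shapeset 27 3 243 \<subseteq> set [9]"
  proof
    fix a assume "a \<in> shapeset 27 3 243"
    then have h: "a dvd 243" "27 \<le> 3*a" "3*a*a \<le> 729" by (simp_all add: shapeset_def)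
    then have "a * a < 16 * 16" by simp
    then have "a < 16" by (rule sq_lt)
    then have "a = 9 \<or> a = 10 \<or> a = 11 \<or> a = 12 \<or> a = 13 \<or> a = 14 \<or> a = 15" using h(2) \<open>a < _\<close> by presburger
    then show "a \<in> set [9]" using h(1) by auto
  qed
  then show ?thesis by (rule card_list_le') simp
qed

lemma shp45: "card (shapeset 45 3 675) \<le> 2"
proof -
  have "shapeset 45 3 675 \<subseteq> set [15, 25]"
  proof
    fix a assume "a \<in> shapeset 45 3 675"
    then have h: "a dvd 675" "45 \<le> 3*a" "3*a*a \<le> 2025" by (simp_all add: shapeset_def)
    then have "a * a < 26 * 26" by simp
    then have "a < 26" by (rule sq_lt)
    then have "a = 15 \<or> a = 16 \<or> a = 17 \<or> a = 18 \<or> a = 19 \<or> a = 20 \<or> a = 21 \<or> a = 22 \<or> a = 23 \<or> a = 24 \<or> a = 25" using h(2) \<open>a < _\<close> by presburger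
    then show "a \<in> set [15, 25]" using h(1) by auto
  qed
  then show ?thesis by (rule card_list_le') simp
qed

lemma shp63: "card (shapeset 63 3 1323) \<le> 2"
proof -
  have "shapeset 63 3 1323 \<subseteq> set [21, 27]"
  proof
    fix a assume "a \<in> shapeset 63 3 1323"
    then have h: "a dvd 1323" "63 \<le> 3*a" "3*a*a \<le> 3969" by (simp_all add: shapeset_def)
    then have "a * a < 37 * 37" by simp
    then have "a < 37" by (rule sq_lt)
    then have "a = 21 \<or> a = 22 \<or> a = 23 \<or> a = 24 \<or> a = 25 \<or> a = 26 \<or> a = 27 \<or> a = 28 \<or> a = 29 \<or> a = 30
      \<or> a = 31 \<or> a = 32 \<or> a = 33 \<or> a = 34 \<or> a = 35 \<or> a = 36" using h(2) \<open>a < _\<close> by presburger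
    then show "a \<in> set [21, 27]" using h(1) by auto
  qed
  then show ?thesis by (rule card_list_le') simp
qed

lemma shp30: "shapeset 30 3 300 \<subseteq> {10, 12, 15}"
proof
  fix a assume "a \<in> shapeset 30 3 300"
  then have h: "a dvd 300" "30 \<le> 3*a" "3*a*a \<le> 900" by (simp_all add: shapeset_def)
  then have "a * a < 18 * 18" by simp
  then have "a < 18" by (rule sq_lt)
  then have "a = 10 \<or> a = 11 \<or> a = 12 \<or> a = 13 \<or> a = 14 \<or> a = 15 \<or> a = 16 \<or> a = 17" using h(2) \<open>a < _\<close> by presburger
  then show "a \<in> {10, 12, 15}" using h(1) by auto
qed

lemma Ep_any:
  assumes pq: "prime q" and pr: "prime r"
  shows "card (Ep l (q*r)) \<le> 5" "card (Ep 5 (q*r)) \<le> 4" "card (Ep 2 (q*r)) \<le> 3"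
    "3 \<le> card (Ep 3 (q*r)) \<Longrightarrow> q*r = 4 \<or> q*r = 6 \<or> q*r = 9 \<or> q*r = 10 \<or> q*r = 15 \<or> q*r = 21"
proof -
  have "card (Ep l (q*r)) \<le> 5 \<and> card (Ep 5 (q*r)) \<le> 4 \<and> card (Ep 2 (q*r)) \<le> 3 \<and>
    (3 \<le> card (Ep 3 (q*r)) \<longrightarrow> q*r = 4 \<or> q*r = 6 \<or> q*r = 9 \<or> q*r = 10 \<or> q*r = 15 \<or> q*r = 21)"
  proof (cases "q \<le> r")
    case True
    show ?thesis using Ep_gen[OF pq pr True] Ep_5[OF pq pr True] Ep_2[OF pq pr True] Ep_3[OF pq pr True]
      by auto
  next
    case False
    then have F: "r \<le> q" by simp
    have e: "q * r = r * q" by simp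
    show ?thesis unfolding e using Ep_gen[OF pr pq F] Ep_5[OF pr pq F] Ep_2[OF pr pq F] Ep_3[OF pr pq F]
      by auto
  qed
  then show "card (Ep l (q*r)) \<le> 5" "card (Ep 5 (q*r)) \<le> 4" "card (Ep 2 (q*r)) \<le> 3"
    "3 \<le> card (Ep 3 (q*r)) \<Longrightarrow> q*r = 4 \<or> q*r = 6 \<or> q*r = 9 \<or> q*r = 10 \<or> q*r = 15 \<or> q*r = 21"
    by blast+
qed

lemma prime_div3:
  assumes "prime (l::nat)" "prime p" "prime q" "prime r" "l dvd p*q*r"
  shows "\<exists>a b. prime a \<and> prime b \<and> p*q*r = l*(a*b)"
proof -
  have "l dvd p \<or> l dvd q \<or> l dvd r" using assms(1,5) by (simp add: prime_dvd_mult_iff)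
  moreover have "l dvd p \<Longrightarrow> l = p" "l dvd q \<Longrightarrow> l = q" "l dvd r \<Longrightarrow> l = r"
    using assms primes_dvd_imp_eq by blast+
  ultimately have "l = p \<or> l = q \<or> l = r" by blast
  then show ?thesis using assms(2-4) by (auto simp: algebra_simps)
qed

lemma prime_div2:
  assumes "prime (l::nat)" "prime p" "prime q" "l dvd p*q"
  shows "\<exists>a. prime a \<and> p*q = l*a"
proof -
  have "l dvd p \<or> l dvd q" using assms(1,4) by (simp add: prime_dvd_mult_iff)
  moreover have "l dvd p \<Longrightarrow> l = p" "l dvd q \<Longrightarrow> l = q"
    using assms primes_dvd_imp_eq by blast+
  ultimately have "l = p \<or> l = q" by blast
  then show ?thesis using assms(2-3) by (auto simp: algebra_simps)
qed



lemma Ep2_shape: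
  assumes "n = 2 * s" "4 * A = n * n"
  shows "shapeset n 4 A \<subseteq> Ep 2 s"
proof
  fix a assume "a \<in> shapeset n 4 A"
  then have h: "a dvd A" "n \<le> 4 * a" "4 * a * a \<le> n * n" unfolding shapeset_def by auto
  have A: "A = s * s" using assms by simp
  have "4 * (a * a) \<le> 4 * (s * s)" using h(3) assms(1) by (simp add: algebra_simps)
  then have "a * a \<le> s * s" by simp
  then have "a \<le> s" by (rule sq_le_imp)
  moreover have "s \<le> 2 * a" using h(2) assms(1) by simp
  ultimately show "a \<in> Ep 2 s" unfolding Ep_def using h(1) A by simp
qed

theorem NT_main:
  assumes hyp: "(\<exists>p q. prime p \<and> prime q \<and> n = p * q) \<or>
         (\<exists>p q r. prime p \<and> prime q \<and> prime r \<and> n = p * q * r)"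
    and k2: "2 \<le> k" and kA: "k * A = n * n" and c: "k \<le> card (shapeset n k A)"
  shows "k = 2 \<or> (n = 30 \<and> k = 3)"
proof (rule ccontr)
  assume neg: "\<not> (k = 2 \<or> (n = 30 \<and> k = 3))"
  have kdvd: "k dvd n * n" using kA by (metis dvd_triv_left)
  show False
  proof (cases "prime k")
    case pk: True
    have kn: "k dvd n" using pk kdvd by (simp add: prime_dvd_mult_iff)
    have k3: "3 \<le> k" using k2 neg by auto
    from hyp show False
    proof
      assume "\<exists>p q. prime p \<and> prime q \<and> n = p * q"
      then obtain p q where pq: "prime p" "prime q" "n = p * q" by blast
      obtain s where s: "prime s" "p * q = k * s" using prime_div2[OF pk pq(1,2)] kn pq(3) by blast
      have s0: "0 < s" using s(1) prime_gt_0_nat by blast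
      have "card (shapeset n k A) \<le> card (Ep k s)"
        by (rule prime_inj[OF pk s0 _ kA]) (use pq s in simp)
      also have "\<dots> \<le> 2" by (rule Ep_prime[OF s(1)])
      finally show False using c k3 by simp
    next
      assume "\<exists>p q r. prime p \<and> prime q \<and> prime r \<and> n = p * q * r"
      then obtain p q r where pqr: "prime p" "prime q" "prime r" "n = p * q * r" by blast
      obtain a b where ab: "prime a" "prime b" "p * q * r = k * (a * b)"
        using prime_div3[OF pk pqr(1-3)] kn pqr(4) by blast
      have s0: "0 < a * b" using ab prime_gt_0_nat by simp
      have ci: "card (shapeset n k A) \<le> card (Ep k (a*b))"
        by (rule prime_inj[OF pk s0 _ kA]) (use pqr ab in simp)
      have "k = 3 \<or> k = 5 \<or> 7 \<le> k"
      proof -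
        have "k \<noteq> 4" "k \<noteq> 6" using pk by auto
        then show ?thesis using k3 by linarith
      qed
      moreover have "k \<noteq> 3"
      proof
        assume k3': "k = 3"
        then have "3 \<le> card (Ep 3 (a*b))" using ci c by simp
        then have "a*b = 4 \<or> a*b = 6 \<or> a*b = 9 \<or> a*b = 10 \<or> a*b = 15 \<or> a*b = 21"
          using Ep_any(4)[OF ab(1,2)] by blast
        moreover have nn: "n = 3 * (a * b)" using pqr(4) ab(3) k3' by simp
        moreover have "A = 3 * (a * b) * (a * b)" using kA nn k3' by simp
        ultimately consider "n = 12" "A = 48" | "n = 18" "A = 108" | "n = 27" "A = 243" | "n = 30"
          | "n = 45" "A = 675" | "n = 63" "A = 1323" by auto
        then show False
        proof cases
          case 1 then show False using c shp12 k3' by simp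
        next
          case 2 then show False using c shp18 k3' by simp
        next
          case 3 then show False using c shp27 k3' by simp
        next
          case 4 then show False using neg k3' by simp
        next
          case 5 then show False using c shp45 k3' by simp
        next
          case 6 then show False using c shp63 k3' by simp
        qed
      qed
      moreover have "k \<noteq> 5" using ci c Ep_any(2)[OF ab(1,2)] by auto
      moreover have "\<not> 7 \<le> k" using ci c Ep_any(1)[OF ab(1,2), of k] by auto
      ultimately show False by blast
    qed
  next
    case npk: False
    from hyp show False
    proof
      assume "\<exists>p q. prime p \<and> prime q \<and> n = p * q"
      then obtain p q where pq: "prime p" "prime q" "n = p * q" by blast
      have "card (shapeset n k A) < k" by (rule composite2[OF pq kA k2 npk])
      then show False using c by simp
    next
      assume "\<exists>p q r. prime p \<and> prime q \<and> prime r \<and> n = p * q * r"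
      then obtain p q r where pqr: "prime p" "prime q" "prime r" "n = p * q * r" by blast
      show False
      proof (cases "k = 4")
        case False
        have "card (shapeset n k A) < k" by (rule composite3[OF pqr kA k2 npk False])
        then show False using c by simp
      next
        case True
        have "2 dvd n * n" using kdvd True by (metis dvd_trans dvd_triv_left numeral_Bit0 mult_2)
        then have "2 dvd n" using prime_dvd_mult_iff[of 2 n n] by simp
        then obtain a b where ab: "prime a" "prime b" "p * q * r = 2 * (a * b)"
          using prime_div3[of 2 p q r] pqr by auto
        have nn: "n = 2 * (a * b)" using pqr(4) ab(3) by simp
        have "shapeset n 4 A \<subseteq> Ep 2 (a*b)"
          by (rule Ep2_shape[OF nn]) (use True kA in simp)
        then have "card (shapeset n k A) \<le> card (Ep 2 (a*b))"
          using True by (intro card_mono[OF Ep_finite]) simp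
        also have "\<dots> \<le> 3" by (rule Ep_any(3)[OF ab(1,2)])
        finally show False using c True by simp
      qed
    qed
  qed
qed



lemma row_at:
  assumes D: "dissection n R" and rR: "r \<in> R"
  shows "(\<Sum>s\<in>R. if fst (snd s) \<le> fst (snd r) \<and> fst (snd r) < fst (snd s) + rheight s then rwidth s else 0) = n"
  by (rule diss_row[OF D]) (use diss_dims[OF D rR] in linarith)

lemma col_at:
  assumes D: "dissection n R" and rR: "r \<in> R"
  shows "(\<Sum>s\<in>R. if fst s \<le> fst r \<and> fst r < fst s + rwidth s then rheight s else 0) = n"
  by (rule diss_col[OF D]) (use diss_dims[OF D rR] in linarith)

lemma arith2:
  fixes w1 h1 w2 h2 n A :: nat
  assumes F1: "w1 + (if c1 then w2 else 0) = n" and F2: "w2 + (if c2 then w1 else 0) = n"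
    and G1: "h1 + (if d1 then h2 else 0) = n" and G2: "h2 + (if d2 then h1 else 0) = n"
    and a1: "w1 * h1 = A" and a2: "w2 * h2 = A" and nA: "2 * A = n * n"
    and pos: "0 < w1" "0 < h1" "0 < w2" "0 < h2"
    and nc: "\<not> (w1 = w2 \<and> h1 = h2)"
  shows False
proof (cases c1)
  case False
  then have w1: "w1 = n" using F1 by simp
  have w2: "w2 = n" using F2 w1 pos by (cases c2) auto
  have "n * h1 = n * h2" using a1 a2 w1 w2 by simp
  then have "h1 = h2" using pos w1 by simp
  then show False using nc w1 w2 by simp
next
  case c1: True
  show False
  proof (cases d1)
    case False
    then have h1: "h1 = n" using G1 by simp
    have h2: "h2 = n" using G2 h1 pos by (cases d2) auto
    have "w1 * n = w2 * n" using a1 a2 h1 h2 by simp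
    then have "w1 = w2" using pos h1 by simp
    then show False using nc h1 h2 by simp
  next
    case True
    have s1: "w1 + w2 = n" using F1 c1 by simp
    have s2: "h1 + h2 = n" using G1 True by simp
    have "n * n = (w1 + w2) * (h1 + h2)" using s1 s2 by simp
    also have "\<dots> = w1 * h1 + w2 * h2 + (w1 * h2 + w2 * h1)" by (simp add: algebra_simps)
    also have "\<dots> = n * n + (w1 * h2 + w2 * h1)" using a1 a2 nA by simp
    finally have "w1 * h2 + w2 * h1 = 0" by simp
    then show False using pos by simp
  qed
qed

lemma geo2:
  assumes D: "dissection n R" and c: "card R = 2"
    and AR: "\<And>r. r \<in> R \<Longrightarrow> rwidth r * rheight r = A" and nA: "card R * A = n * n"
    and NC: "\<forall>r\<in>R. \<forall>s\<in>R. r \<noteq> s \<longrightarrow> \<not> congruent_rect r s"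
  shows False
proof -
  obtain r1 r2 where R: "R = {r1, r2}" and ne: "r1 \<noteq> r2" using c unfolding card_2_iff by blast
  have inR: "r1 \<in> R" "r2 \<in> R" using R by auto
  define w1 where "w1 = rwidth r1"
  define h1 where "h1 = rheight r1"
  define w2 where "w2 = rwidth r2"
  define h2 where "h2 = rheight r2"
  note wd = w1_def h1_def w2_def h2_def
  have pos: "0 < w1" "0 < h1" "0 < w2" "0 < h2" using diss_dims[OF D] inR unfolding wd by auto
  have cr1: "fst (snd r1) \<le> fst (snd r1) \<and> fst (snd r1) < fst (snd r1) + rheight r1" using pos wd by simp
  have cr2: "fst (snd r2) \<le> fst (snd r2) \<and> fst (snd r2) < fst (snd r2) + rheight r2" using pos wd by simp
  have cc1: "fst r1 \<le> fst r1 \<and> fst r1 < fst r1 + rwidth r1" using pos wd by simp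
  have cc2: "fst r2 \<le> fst r2 \<and> fst r2 < fst r2 + rwidth r2" using pos wd by simp
  have F1: "w1 + (if fst (snd r2) \<le> fst (snd r1) \<and> fst (snd r1) < fst (snd r2) + rheight r2 then w2 else 0) = n"
    using row_at[OF D inR(1)] ne cr1 unfolding R wd by simp
  have F2: "w2 + (if fst (snd r1) \<le> fst (snd r2) \<and> fst (snd r2) < fst (snd r1) + rheight r1 then w1 else 0) = n"
    using row_at[OF D inR(2)] ne cr2 unfolding R wd by (simp add: add.commute)
  have G1: "h1 + (if fst r2 \<le> fst r1 \<and> fst r1 < fst r2 + rwidth r2 then h2 else 0) = n"
    using col_at[OF D inR(1)] ne cc1 unfolding R wd by simp
  have G2: "h2 + (if fst r1 \<le> fst r2 \<and> fst r2 < fst r1 + rwidth r1 then h1 else 0) = n"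
    using col_at[OF D inR(2)] ne cc2 unfolding R wd by (simp add: add.commute)
  have a1: "w1 * h1 = A" and a2: "w2 * h2 = A" using AR inR unfolding wd by auto
  have n2: "2 * A = n * n" using nA c by simp
  have "\<not> congruent_rect r1 r2" using NC inR ne by blast
  then have nc: "\<not> (w1 = w2 \<and> h1 = h2)" unfolding congruent_rect_def wd by blast
  show False by (rule arith2[OF F1 F2 G1 G2 a1 a2 n2 pos nc])
qed

lemma width_opts:
  assumes "mside r = m" "rwidth r * rheight r = 300" "0 < m"
  shows "rwidth r = m \<or> rwidth r = 300 div m"
proof (cases "rwidth r \<le> rheight r")
  case True
  then have "min (rwidth r) (rheight r) = rwidth r" by simp
  then show ?thesis using assms(1) unfolding mside_def by simp
next
  case False
  then have "min (rwidth r) (rheight r) = rheight r" by simp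
  then have "rheight r = m" using assms(1) unfolding mside_def by simp
  then have "rwidth r * m = 300" using assms(2) by simp
  then have "rwidth r * m div m = 300 div m" by simp
  then show ?thesis using assms(3) by simp
qed

lemma geo30:
  assumes D: "dissection 30 R" and c: "card R = 3"
    and AR: "\<And>r. r \<in> R \<Longrightarrow> rwidth r * rheight r = A" and nA: "card R * A = 30 * 30"
    and inj: "inj_on mside R" and sub: "mside ` R \<subseteq> {10, 12, 15}"
  shows False
proof -
  have A: "A = 300" using nA c by simp
  have fin: "finite R" using D unfolding dissection_def by blast
  have "card (mside ` R) = 3" using card_image[OF inj] c by simp
  then have img: "mside ` R = {10, 12, 15}"
    by (intro card_subset_eq[OF _ sub]) simp_all
  obtain r1 where r1: "r1 \<in> R" "mside r1 = 10" using img by (metis imageE insertI1)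
  obtain r2 where r2: "r2 \<in> R" "mside r2 = 15" using img by (metis imageE insertCI)
  obtain r3 where r3: "r3 \<in> R" "mside r3 = 12" using img by (metis imageE insertCI)
  have ne: "r1 \<noteq> r2" "r1 \<noteq> r3" "r2 \<noteq> r3" using r1 r2 r3 by auto
  have R: "R = {r1, r2, r3}"
  proof -
    have "{r1, r2, r3} \<subseteq> R" using r1 r2 r3 by simp
    moreover have "card {r1, r2, r3} = 3" using ne by simp
    ultimately show ?thesis using c fin by (metis card_subset_eq)
  qed
  have w1: "rwidth r1 = 10 \<or> rwidth r1 = 30" using width_opts[OF r1(2)] AR[OF r1(1)] A by simp
  have w2: "rwidth r2 = 15 \<or> rwidth r2 = 20" using width_opts[OF r2(2)] AR[OF r2(1)] A by simp
  have w3: "rwidth r3 = 12 \<or> rwidth r3 = 25" using width_opts[OF r3(2)] AR[OF r3(1)] A by simp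
  have h3: "0 < rheight r3" using diss_dims[OF D r3(1)] by simp
  define f where "f s = (if fst (snd s) \<le> fst (snd r3) \<and> fst (snd r3) < fst (snd s) + rheight s then rwidth s else 0)" for s
  have "sum f R = 30" using row_at[OF D r3(1)] unfolding f_def .
  then have "f r1 + f r2 + f r3 = 30" using ne unfolding R by (simp add: add.assoc)
  moreover have "f r3 = rwidth r3" using h3 unfolding f_def by simp
  moreover have "f r1 = 0 \<or> f r1 = 10 \<or> f r1 = 30" using w1 unfolding f_def by auto
  moreover have "f r2 = 0 \<or> f r2 = 15 \<or> f r2 = 20" using w2 unfolding f_def by auto
  ultimately show False using w3 by auto
qed

theorem mainTheorem10:
  fixes n :: nat
  assumes "(\<exists>p q. prime p \<and> prime q \<and> n = p * q) \<or>
         (\<exists>p q r. prime p \<and> prime q \<and> prime r \<and> n = p * q * r)"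
  shows "\<not> (\<exists>R. perfect_mondrian n R)"
proof
  assume "\<exists>R. perfect_mondrian n R"
  then obtain R where P: "perfect_mondrian n R" by blast
  obtain A where nA: "card R * A = n * n" and AR: "\<And>r. r \<in> R \<Longrightarrow> rwidth r * rheight r = A"
    and c2: "2 \<le> card R" and inj: "inj_on mside R" and sub: "mside ` R \<subseteq> shapeset n (card R) A"
    using perfect_basic[OF P] by blast
  have D: "dissection n R" and NC: "\<forall>r\<in>R. \<forall>s\<in>R. r \<noteq> s \<longrightarrow> \<not> congruent_rect r s"
    using P unfolding perfect_mondrian_def mondrian_partition_def by blast+
  have n0: "0 < n" using assms prime_gt_0_nat by auto
  have A0: "0 < A" using nA n0 by (cases A) auto
  have "card R = card (mside ` R)" using card_image[OF inj] by simp
  also have "\<dots> \<le> card (shapeset n (card R) A)" by (rule card_mono[OF shapeset_finite[OF A0] sub])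
  finally have ck: "card R \<le> card (shapeset n (card R) A)" .
  have "card R = 2 \<or> (n = 30 \<and> card R = 3)" by (rule NT_main[OF assms c2 nA ck])
  then show False
  proof
    assume "card R = 2"
    then show False using geo2[OF D _ AR nA NC] by blast
  next
    assume h: "n = 30 \<and> card R = 3"
    then have "mside ` R \<subseteq> {10, 12, 15}" using sub shp30 nA by auto
    then show False using geo30[of R A] D AR nA inj h by simp
  qed
qed


end
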